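(* Fix $\alpha\in(0,1)$ and $L\in\mathbb{N}$. Every $f\in\mathcal{N}_1(L)$ is an $\alpha$-power piecewise linear function with at most $L+1$ linear pieces.
   Context: Leaky-ReLU: $\sigma_\alpha(x)=\max(\alpha x,x)$. $\mathcal{N}_1(L)$ is the set of functions $f_L:\mathbb{R}\to\mathbb{R}$ with $f_0(x)=w_0x+b_0$, $f_k(x)=w_k\sigma_\alpha(f_{k-1}(x))+b_k$ ($k=1,\dots,L$), $w_k,b_k\in\mathbb{R}$. A piecewise linear (PL) function is a continuous function $g:\mathbb{R}\to\mathbb{R}$ which is affine on each of finitely many intervals partitioning $\mathbb{R}$ (separated by finitely many breakpoints). A PL function $g$ is called $\alpha$-power PL if there is a constant $c\in\mathbb{R}$ such that the slope of every linear piece of $g$ lies in $\{c\alpha^k: k\in\mathbb{Z}\}$. *)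

theory Defs
  imports "HOL-Analysis.Analysis"
begin

definition leaky_relu :: "real \<Rightarrow> real \<Rightarrow> real" where
  "leaky_relu \<alpha> x = max (\<alpha> * x) x"

fun net_eval :: "real \<Rightarrow> (real \<times> real) list \<Rightarrow> real \<Rightarrow> real" where
  "net_eval \<alpha> [] x = x"
| "net_eval \<alpha> [(w,b)] x = w * x + b"
| "net_eval \<alpha> ((w,b) # ps) x = w * leaky_relu \<alpha> (net_eval \<alpha> ps x) + b"

text \<open>ps is stored outermost-layer first: ps = [(wL,bL),...,(w0,b0)].\<close>
definition NN1 :: "real \<Rightarrow> nat \<Rightarrow> (real \<Rightarrow> real) set" where
  "NN1 \<alpha> L = {f. \<exists>ps. length ps = L + 1 \<and> f = net_eval \<alpha> ps}"

text \<open>Closed pieces force continuity.\<close>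
definition pl_with_pieces :: "(real \<Rightarrow> real) \<Rightarrow> real list \<Rightarrow> real list \<Rightarrow> real list \<Rightarrow> bool" where
  "pl_with_pieces g ts a c \<longleftrightarrow>
     sorted_wrt (<) ts \<and> length a = length ts + 1 \<and> length c = length ts + 1 \<and>
     (\<forall>i < length ts + 1. \<forall>x.
        (i = 0 \<or> ts ! (i - 1) \<le> x) \<and> (i = length ts \<or> x \<le> ts ! i)
        \<longrightarrow> g x = a ! i * x + c ! i)"

definition alpha_power_PL_at_most :: "real \<Rightarrow> nat \<Rightarrow> (real \<Rightarrow> real) \<Rightarrow> bool" where
  "alpha_power_PL_at_most \<alpha> n g \<longleftrightarrow>
     (\<exists>ts a c. pl_with_pieces g ts a c \<and> length a \<le> n \<and>
        (\<exists>k0::real. \<forall>s \<in> set a. \<exists>k::int. s = k0 * \<alpha> powi k))"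

end

theory Submission imports Defs begin

lemma tw_facts:
  assumes s: "sorted_wrt (<) (ts::real list)" and dc: "\<And>s t. s \<le> t \<Longrightarrow> P t \<Longrightarrow> P s"
  shows "\<forall>i<length (takeWhile P ts). P (ts!i)"
    and "\<forall>i. length (takeWhile P ts) \<le> i \<and> i < length ts \<longrightarrow> \<not> P (ts!i)"
proof -
  show "\<forall>i<length (takeWhile P ts). P (ts!i)"
    by (metis nth_mem set_takeWhileD takeWhile_nth)
  show "\<forall>i. length (takeWhile P ts) \<le> i \<and> i < length ts \<longrightarrow> \<not> P (ts!i)"
  proof (intro allI impI)
    fix i assume i: "length (takeWhile P ts) \<le> i \<and> i < length ts"
    let ?n = "length (takeWhile P ts)"
    have "?n < length ts" using i by simp
    hence np: "\<not> P (ts ! ?n)" by (rule nth_length_takeWhile)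
    have "ts ! ?n \<le> ts ! i"
    proof (cases "?n = i")
      case False
      then have "?n < i" using i by simp
      then show ?thesis using sorted_wrt_nth_less[OF s] i by fastforce
    qed simp
    then show "\<not> P (ts!i)" using np dc by blast
  qed
qed

lemma split_pl:
  assumes pl: "pl_with_pieces h ts a c"
    and left: "\<forall>x\<le>z. g x = p * h x + q" and right: "\<forall>x\<ge>z. g x = r * h x + q"
  shows "\<exists>ts' a' c'. pl_with_pieces g ts' a' c' \<and> length a' \<le> length a + 1 \<and>
           set a' \<subseteq> ((times p) ` set a \<union> (times r) ` set a)"
proof -
  have s: "sorted_wrt (<) ts" and la: "length a = length ts + 1" and lc: "length c = length ts + 1"
    and pc: "\<And>i x. i < length ts + 1 \<Longrightarrow> (i = 0 \<or> ts ! (i - 1) \<le> x) \<Longrightarrow> (i = length ts \<or> x \<le> ts ! i)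
        \<Longrightarrow> h x = a ! i * x + c ! i"
    using pl unfolding pl_with_pieces_def by auto
  define n1 where "n1 = length (takeWhile (\<lambda>t. t < z) ts)"
  define m where "m = length (takeWhile (\<lambda>t. t \<le> z) ts)"
  have F1: "\<forall>i<n1. ts!i < z" and F2: "\<forall>i. n1 \<le> i \<and> i < length ts \<longrightarrow> z \<le> ts!i"
    using tw_facts[OF s, of "\<lambda>t. t < z"] unfolding n1_def by force+
  have F3: "\<forall>i<m. ts!i \<le> z" and F4: "\<forall>i. m \<le> i \<and> i < length ts \<longrightarrow> z < ts!i"
    using tw_facts[OF s, of "\<lambda>t. t \<le> z"] unfolding m_def by force+
  have mlen: "m \<le> length ts" unfolding m_def by (rule length_takeWhile_le)
  have n1len: "n1 \<le> length ts" unfolding n1_def by (rule length_takeWhile_le)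
  have n1m: "n1 \<le> m"
  proof (rule ccontr)
    assume "\<not> n1 \<le> m"
    then have mn: "m < n1" by simp
    then have "ts ! m < z" using F1 by blast
    moreover have "z < ts ! m" using F4 mn n1len by simp
    ultimately show False by simp
  qed
  define ts' where "ts' = take n1 ts @ z # drop m ts"
  define a' where "a' = map (times p) (take (n1+1) a) @ map (times r) (drop m a)"
  define c' where "c' = map (\<lambda>s. p * s + q) (take (n1+1) c) @ map (\<lambda>s. r * s + q) (drop m c)"
  have lts': "length ts' = n1 + 1 + (length ts - m)" unfolding ts'_def using n1len by simp
  have la': "length a' = length ts' + 1" unfolding a'_def using la lts' n1len mlen by simp
  have lc': "length c' = length ts' + 1" unfolding c'_def using lc lts' n1len mlen by simp
  have sorted': "sorted_wrt (<) ts'"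
    unfolding ts'_def sorted_wrt_append
  proof (intro conjI)
    show "sorted_wrt (<) (take n1 ts)" using s by (simp add: sorted_wrt_take)
    show "sorted_wrt (<) (z # drop m ts)"
      using s F4 by (auto simp: sorted_wrt_drop in_set_conv_nth)
    show "\<forall>x\<in>set (take n1 ts). \<forall>y\<in>set (z # drop m ts). x < y"
    proof (intro ballI)
      fix x y assume x: "x \<in> set (take n1 ts)" and y: "y \<in> set (z # drop m ts)"
      obtain i where i: "i < length (take n1 ts)" "x = take n1 ts ! i" using x by (auto simp: in_set_conv_nth)
      have "x < z" using i F1 by simp
      moreover have "z \<le> y"
      proof (cases "y = z")
        case False
        then have "y \<in> set (drop m ts)" using y by simp
        then obtain j where j: "j < length (drop m ts)" "y = drop m ts ! j" by (auto simp: in_set_conv_nth)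
        then have "y = ts ! (m + j)" "m + j < length ts" using mlen by auto
        then show ?thesis using F4[rule_format, of "m+j"] by simp
      qed simp
      ultimately show "x < y" by simp
    qed
  qed
  have pieces: "\<forall>i < length ts' + 1. \<forall>x.
        (i = 0 \<or> ts' ! (i - 1) \<le> x) \<and> (i = length ts' \<or> x \<le> ts' ! i)
        \<longrightarrow> g x = a' ! i * x + c' ! i"
  proof (intro allI impI)
    fix i x assume i: "i < length ts' + 1"
      and cx: "(i = 0 \<or> ts' ! (i - 1) \<le> x) \<and> (i = length ts' \<or> x \<le> ts' ! i)"
    show "g x = a' ! i * x + c' ! i"
    proof (cases "i \<le> n1")
      case True
      have ai: "a' ! i = p * a ! i" unfolding a'_def using True la n1len by (simp add: nth_append)
      have ci: "c' ! i = p * c ! i + q" unfolding c'_def using True lc n1len by (simp add: nth_append)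
      have ne: "i \<noteq> length ts'" using True lts' by simp
      have tsi: "ts' ! i = (if i < n1 then ts ! i else z)" unfolding ts'_def using True n1len
        by (simp add: nth_append)
      have xle: "x \<le> ts' ! i" using cx ne by simp
      have xz: "x \<le> z" using xle tsi F1 by (auto split: if_splits)
      have lo: "i = 0 \<or> ts ! (i - 1) \<le> x"
      proof (cases "i = 0")
        case False
        then have i1: "i - 1 < n1" using True by simp
        then have "ts' ! (i-1) = ts ! (i-1)" unfolding ts'_def using n1len by (simp add: nth_append)
        then show ?thesis using cx False by simp
      qed simp
      have hi: "i = length ts \<or> x \<le> ts ! i"
      proof (cases "i < n1")
        case True then show ?thesis using xle tsi by simp
      next
        case False
        then have "i = n1" using \<open>i \<le> n1\<close> by simp
        then show ?thesis using F2 xz n1len by (metis le_less_linear not_less order.trans order_refl le_antisym)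
      qed
      have "h x = a ! i * x + c ! i" using pc[OF _ lo hi] True n1len by simp
      then show ?thesis using left xz ai ci by (simp add: algebra_simps)
    next
      case False
      define j where "j = i - (n1 + 1)"
      have ij: "i = n1 + 1 + j" using False j_def by simp
      have jle: "j \<le> length ts - m" using i lts' ij by simp
      have ai: "a' ! i = r * a ! (m+j)" unfolding a'_def using ij la n1len mlen jle by (simp add: nth_append)
      have ci: "c' ! i = r * c ! (m+j) + q" unfolding c'_def using ij lc n1len mlen jle by (simp add: nth_append, subst nth_drop, simp_all)
      have tsim1: "ts' ! (i - 1) = (if j = 0 then z else ts ! (m + j - 1))"
        unfolding ts'_def using ij n1len mlen jle by (simp add: nth_append)
      have lowx: "ts' ! (i-1) \<le> x" using cx ij by simp
      have zx: "z \<le> x"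
      proof (cases "j = 0")
        case False
        then have "m \<le> m+j-1 \<and> m+j-1 < length ts" using jle mlen by arith
        then have "z < ts ! (m+j-1)" using F4 by blast
        then show ?thesis using lowx tsim1 False by simp
      qed (use lowx tsim1 in simp)
      have lo: "m + j = 0 \<or> ts ! (m + j - 1) \<le> x"
      proof (cases "j = 0")
        case True
        then show ?thesis
        proof (cases "m = 0")
          case False then show ?thesis using True F3 zx by (metis add_0_right diff_less less_numeral_extra(1) not_gr_zero order.trans)
        qed simp
      next
        case False then show ?thesis using lowx tsim1 by simp
      qed
      have hi: "m + j = length ts \<or> x \<le> ts ! (m + j)"
      proof (cases "i = length ts'")
        case True then have "m + j = length ts" using ij lts' mlen n1m by arith
        then show ?thesis by simp
      next
        case False
        then have "x \<le> ts' ! i" using cx by simp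
        moreover have "ts' ! i = ts ! (m + j)" unfolding ts'_def using ij n1len mlen jle False lts'
          by (simp add: nth_append)
        ultimately show ?thesis by simp
      qed
      have mc: "m \<le> length c" using lc mlen by simp
      have "h x = a ! (m+j) * x + c ! (m+j)" using pc[OF _ lo hi] jle mlen by simp
      then show ?thesis using right zx ai ci by (simp add: algebra_simps)
    qed
  qed
  have "pl_with_pieces g ts' a' c'"
    unfolding pl_with_pieces_def using sorted' la' lc' pieces by blast
  moreover have "length a' \<le> length a + 1" using la' lts' la n1m mlen by simp
  moreover have "set a' \<subseteq> ((times p) ` set a \<union> (times r) ` set a)"
    unfolding a'_def by (auto dest: in_set_takeD in_set_dropD)
  ultimately show ?thesis by blast
qed


lemma leaky_pos: "0 \<le> x \<Longrightarrow> \<alpha> \<le> 1 \<Longrightarrow> 0 < \<alpha> \<Longrightarrow> leaky_relu \<alpha> x = x"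
  unfolding leaky_relu_def by (simp add: max_def mult_left_le_one_le)

lemma leaky_neg: "x \<le> 0 \<Longrightarrow> \<alpha> \<le> 1 \<Longrightarrow> 0 < \<alpha> \<Longrightarrow> leaky_relu \<alpha> x = \<alpha> * x"
proof -
  assume "x \<le> 0" "\<alpha> \<le> 1" "0 < \<alpha>"
  then have "(1 - \<alpha>) * x \<le> 0" by (simp add: mult_nonneg_nonpos)
  then have "x \<le> \<alpha> * x" by (simp add: algebra_simps)
  then show ?thesis unfolding leaky_relu_def by (simp add: max_def)
qed

lemma leaky_mono: "0 < \<alpha> \<Longrightarrow> x \<le> y \<Longrightarrow> leaky_relu \<alpha> x \<le> leaky_relu \<alpha> y"
proof -
  assume "0 < \<alpha>" "x \<le> y"
  then have "\<alpha> * x \<le> \<alpha> * y" by simp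
  then show ?thesis unfolding leaky_relu_def using \<open>x \<le> y\<close> by (simp add: max.coboundedI1 max.coboundedI2)
qed

lemma inv_main:
  assumes a0: "0 < \<alpha>" and a1: "\<alpha> < 1"
  shows "ps \<noteq> [] \<Longrightarrow> (\<exists>ts a c. pl_with_pieces (net_eval \<alpha> ps) ts a c \<and> length a \<le> length ps \<and>
        (\<exists>k0::real. \<forall>s \<in> set a. \<exists>k::int. s = k0 * \<alpha> powi k)) \<and>
        (mono (net_eval \<alpha> ps) \<or> antimono (net_eval \<alpha> ps)) \<and> continuous_on UNIV (net_eval \<alpha> ps)"
proof (induction ps)
  case Nil then show ?case by simp
next
  case (Cons wb ps)
  obtain w b where wb: "wb = (w, b)" by (cases wb)
  show ?case
  proof (cases "ps = []")
    case True
    have f: "net_eval \<alpha> (wb # ps) = (\<lambda>x. w * x + b)" using True wb by auto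
    have P1: "pl_with_pieces (net_eval \<alpha> (wb # ps)) [] [w] [b]"
      unfolding pl_with_pieces_def f by simp
    have P2: "\<forall>s \<in> set [w]. \<exists>k::int. s = w * \<alpha> powi k" by (auto intro: exI[of _ 0])
    have P3: "mono (\<lambda>x. w * x + b) \<or> antimono (\<lambda>x. w * x + b)"
      by (cases "0 \<le> w") (auto simp: mono_def antimono_def intro: mult_left_mono mult_left_mono_neg)
    have P4: "continuous_on UNIV (\<lambda>x. w * x + b)" by (intro continuous_intros)
    have P5: "length [w] \<le> length (wb # ps)" by simp
    have E: "\<exists>ts a c. pl_with_pieces (net_eval \<alpha> (wb # ps)) ts a c \<and> length a \<le> length (wb # ps) \<and>
        (\<exists>k0::real. \<forall>s \<in> set a. \<exists>k::int. s = k0 * \<alpha> powi k)"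
      using P1 P2 P5 by blast
    show ?thesis using E P3 P4 unfolding f by blast
  next
    case False
    define h where "h = net_eval \<alpha> ps"
    obtain q qs where pq: "ps = q # qs" using False by (cases ps) auto
    have g: "net_eval \<alpha> (wb # ps) = (\<lambda>x. w * leaky_relu \<alpha> (h x) + b)"
      unfolding h_def wb pq by auto
    from Cons.IH[OF False] obtain ts a c k0 where
      pl: "pl_with_pieces h ts a c" and la: "length a \<le> length ps"
      and sl: "\<forall>s \<in> set a. \<exists>k::int. s = k0 * \<alpha> powi k"
      and mo: "mono h \<or> antimono h" and ct: "continuous_on UNIV h"
      unfolding h_def by blast
    have pos: "\<And>x. 0 \<le> h x \<Longrightarrow> w * leaky_relu \<alpha> (h x) + b = w * h x + b"
      using leaky_pos a0 a1 by simp
    have neg: "\<And>x. h x \<le> 0 \<Longrightarrow> w * leaky_relu \<alpha> (h x) + b = (w * \<alpha>) * h x + b"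
      using leaky_neg a0 a1 by simp
    have ex: "\<exists>z p r. (p = w \<or> p = w * \<alpha>) \<and> (r = w \<or> r = w * \<alpha>) \<and>
        (\<forall>x\<le>z. w * leaky_relu \<alpha> (h x) + b = p * h x + b) \<and>
        (\<forall>x\<ge>z. w * leaky_relu \<alpha> (h x) + b = r * h x + b)"
    proof (cases "\<forall>x. 0 \<le> h x")
      case True then show ?thesis using pos by blast
    next
      case F1: False
      show ?thesis
      proof (cases "\<forall>x. h x \<le> 0")
        case True then show ?thesis using neg by blast
      next
        case F2: False
        obtain x1 where x1: "h x1 < 0" using F1 by (auto simp: not_le)
        obtain x2 where x2: "0 < h x2" using F2 by (auto simp: not_le)
        have "\<exists>z. h z = 0"
        proof (cases "x1 \<le> x2")
          case True
          then show ?thesis using IVT'[of h x1 0 x2] x1 x2 continuous_on_subset[OF ct] by auto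
        next
          case False
          then show ?thesis using IVT2'[of h x1 0 x2] x1 x2 continuous_on_subset[OF ct] by auto
        qed
        then obtain z where z: "h z = 0" by blast
        show ?thesis
        proof (cases "mono h")
          case True
          have "\<forall>x\<le>z. h x \<le> 0" using True z by (metis monoD)
          moreover have "\<forall>x\<ge>z. 0 \<le> h x" using True z by (metis monoD)
          ultimately show ?thesis using pos neg by blast
        next
          case False
          then have am: "antimono h" using mo by blast
          have "\<forall>x\<le>z. 0 \<le> h x" using am z by (metis antimonoD)
          moreover have "\<forall>x\<ge>z. h x \<le> 0" using am z by (metis antimonoD)
          ultimately show ?thesis using pos neg by blast
        qed
      qed
    qed
    then obtain z p r where pr: "p = w \<or> p = w * \<alpha>" "r = w \<or> r = w * \<alpha>"
      and lft: "\<forall>x\<le>z. net_eval \<alpha> (wb # ps) x = p * h x + b"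
      and rgt: "\<forall>x\<ge>z. net_eval \<alpha> (wb # ps) x = r * h x + b"
      unfolding g by blast
    obtain ts' a' c' where pl': "pl_with_pieces (net_eval \<alpha> (wb # ps)) ts' a' c'"
      and la': "length a' \<le> length a + 1"
      and sa': "set a' \<subseteq> (times p) ` set a \<union> (times r) ` set a"
      using split_pl[OF pl lft rgt] by blast
    have slopes: "\<forall>s \<in> set a'. \<exists>k::int. s = (w * k0) * \<alpha> powi k"
    proof
      fix s assume "s \<in> set a'"
      then obtain t u where t: "t \<in> set a" and su: "s = u * t" and u: "u = w \<or> u = w * \<alpha>"
        using sa' pr by blast
      obtain k :: int where k: "t = k0 * \<alpha> powi k" using sl t by blast
      show "\<exists>k::int. s = (w * k0) * \<alpha> powi k"
        using u
      proof
        assume "u = w" then show ?thesis using su k by (intro exI[of _ k]) simp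
      next
        assume "u = w * \<alpha>"
        then have "s = (w * k0) * \<alpha> powi (k + 1)" using su k a0 by (simp add: power_int_add_1)
        then show ?thesis by blast
      qed
    qed
    have monog: "mono (net_eval \<alpha> (wb # ps)) \<or> antimono (net_eval \<alpha> (wb # ps))"
      unfolding g
    proof (cases "0 \<le> w")
      case True
      show "mono (\<lambda>x. w * leaky_relu \<alpha> (h x) + b) \<or> antimono (\<lambda>x. w * leaky_relu \<alpha> (h x) + b)"
        using mo
      proof
        assume "mono h"
        then have "mono (\<lambda>x. w * leaky_relu \<alpha> (h x) + b)"
          using True a0 by (auto simp: mono_def intro!: mult_left_mono leaky_mono)
        then show ?thesis by blast
      next
        assume "antimono h"
        then have "antimono (\<lambda>x. w * leaky_relu \<alpha> (h x) + b)"
          using True a0 by (auto simp: antimono_def intro!: mult_left_mono leaky_mono)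
        then show ?thesis by blast
      qed
    next
      case False
      then have wn: "w \<le> 0" by simp
      show "mono (\<lambda>x. w * leaky_relu \<alpha> (h x) + b) \<or> antimono (\<lambda>x. w * leaky_relu \<alpha> (h x) + b)"
        using mo
      proof
        assume "mono h"
        then have "antimono (\<lambda>x. w * leaky_relu \<alpha> (h x) + b)"
          using wn a0 by (auto simp: mono_def antimono_def intro!: mult_left_mono_neg leaky_mono)
        then show ?thesis by blast
      next
        assume "antimono h"
        then have "mono (\<lambda>x. w * leaky_relu \<alpha> (h x) + b)"
          using wn a0 by (auto simp: mono_def antimono_def intro!: mult_left_mono_neg leaky_mono)
        then show ?thesis by blast
      qed
    qed
    have contg: "continuous_on UNIV (net_eval \<alpha> (wb # ps))"
      unfolding g leaky_relu_def by (intro continuous_intros ct)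
    have "length a' \<le> length (wb # ps)" using la' la by simp
    then show ?thesis using pl' slopes monog contg by blast
  qed
qed

theorem mainTheorem3:
  fixes \<alpha> :: real and L :: nat and f :: "real \<Rightarrow> real"
  assumes "0 < \<alpha>" and "\<alpha> < 1" and "f \<in> NN1 \<alpha> L"
  shows "alpha_power_PL_at_most \<alpha> (L + 1) f"
proof -
  obtain ps where ps: "length ps = L + 1" "f = net_eval \<alpha> ps" using assms(3) unfolding NN1_def by blast
  then have "ps \<noteq> []" by auto
  from inv_main[OF assms(1,2) this] obtain ts a c k0 where
    "pl_with_pieces (net_eval \<alpha> ps) ts a c" "length a \<le> length ps"
    "\<forall>s \<in> set a. \<exists>k::int. s = k0 * \<alpha> powi k" by blast
  moreover have "length a \<le> L + 1" using ps(1) \<open>length a \<le> length ps\<close> by simp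
  ultimately have "alpha_power_PL_at_most \<alpha> (L + 1) (net_eval \<alpha> ps)"
    unfolding alpha_power_PL_at_most_def by blast
  then show ?thesis using ps(2) by simp
qed

end
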